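(* Let $X_1,\dots,X_n$ be independent random variables with values in $\mathbb{Z}_+$ and means $E(X_i)=p_i>0$, and let $S_n=\sum_{i=1}^nX_i$, $\lambda=\sum_{i=1}^np_i$. Then $$K(S_n)\le\sum_{i=1}^n\frac{p_i}{\lambda}K(X_i).$$
   Context: For a random variable $X$ with distribution $P$ on $\mathbb{Z}_+$ and mean $m>0$, the scaled score function is $\rho_X(x)=\frac{(x+1)P(x+1)}{mP(x)}-1$ and the scaled Fisher information is $K(X)=mE[\rho_X(X)^2]=m\sum_{x\ge0}\frac{\big(\frac{(x+1)P(x+1)}{m}-P(x)\big)^2}{P(x)}$, with conventions $0/0=0$, $c/0=\infty$ for $c>0$. *)

theory Defs
  imports "HOL-Probability.Probability"
begin

definition fisher_term :: "(nat \<Rightarrow> real) \<Rightarrow> real \<Rightarrow> nat \<Rightarrow> ennreal" where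
  "fisher_term P m x =
     (let c = ((real (x + 1) * P (x + 1)) / m - P x)\<^sup>2 in
      if P x = 0 then (if c = 0 then 0 else \<infinity>) else ennreal (c / P x))"

definition scaled_fisher :: "(nat \<Rightarrow> real) \<Rightarrow> real \<Rightarrow> ennreal" where
  "scaled_fisher P m = ennreal m * (\<Sum>x. fisher_term P m x)"

definition K_rv :: "'a measure \<Rightarrow> ('a \<Rightarrow> nat) \<Rightarrow> ennreal" where
  "K_rv M Y = scaled_fisher (\<lambda>x. measure M {\<omega> \<in> space M. Y \<omega> = x})
                            (integral\<^sup>L M (\<lambda>\<omega>. real (Y \<omega>)))"

end

theory Submission
  imports Defs
begin


lemma wcs:
  fixes w g k :: "nat \<Rightarrow> real"
  assumes "\<And>x. x \<in> A \<Longrightarrow> w x \<ge> 0" "\<And>x. x \<in> A \<Longrightarrow> k x \<ge> 0"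
    "\<And>x. x \<in> A \<Longrightarrow> (g x)\<^sup>2 = w x * k x"
  shows "(\<Sum>x\<in>A. g x)\<^sup>2 \<le> (\<Sum>x\<in>A. w x) * (\<Sum>x\<in>A. k x)"
proof -
  have e: "g x = sqrt (w x) * ((if g x < 0 then -1 else 1) * sqrt (k x))" if "x \<in> A" for x
  proof -
    have "\<bar>g x\<bar> = sqrt (w x * k x)" using assms(3)[OF that] by (metis real_sqrt_abs)
    then show ?thesis using assms(1,2)[OF that] by (auto simp: real_sqrt_mult abs_if split: if_splits)
  qed
  have "(\<Sum>x\<in>A. g x) = (\<Sum>x\<in>A. sqrt (w x) * ((if g x < 0 then -1 else 1) * sqrt (k x)))"
    using e by (rule sum.cong[OF refl])
  also have "(\<dots>)\<^sup>2 \<le> (\<Sum>x\<in>A. (sqrt (w x))\<^sup>2) * (\<Sum>x\<in>A. ((if g x < 0 then -1 else 1) * sqrt (k x))\<^sup>2)"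
    by (rule Cauchy_Schwarz_ineq_sum)
  also have "\<dots> = (\<Sum>x\<in>A. w x) * (\<Sum>x\<in>A. k x)"
  proof -
    have "(\<Sum>x\<in>A. (sqrt (w x))\<^sup>2) = (\<Sum>x\<in>A. w x)" using assms(1) by (intro sum.cong) auto
    moreover have "(\<Sum>x\<in>A. ((if g x < 0 then -1 else 1) * sqrt (k x))\<^sup>2) = (\<Sum>x\<in>A. k x)"
    proof (intro sum.cong refl)
      fix x assume x: "x \<in> A"
      show "((if g x < 0 then -1 else 1) * sqrt (k x))\<^sup>2 = k x"
        using assms(2)[OF x] by (simp add: power_mult_distrib)
    qed
    ultimately show ?thesis by simp
  qed
  finally show ?thesis .
qed

definition dd :: "(nat \<Rightarrow> real) \<Rightarrow> real \<Rightarrow> nat \<Rightarrow> real" where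
  "dd P m x = real (x + 1) * P (x + 1) / m - P x"

definition fr :: "(nat \<Rightarrow> real) \<Rightarrow> real \<Rightarrow> nat \<Rightarrow> real" where
  "fr P m x = (if P x = 0 then 0 else (dd P m x)\<^sup>2 / P x)"

lemma ennreal_term_le_suminf: "(f::nat \<Rightarrow> ennreal) x \<le> (\<Sum>i. f i)"
proof -
  have "(\<Sum>i\<in>{x}. f i) \<le> (\<Sum>i. f i)" by (rule sum_le_suminf) auto
  then show ?thesis by simp
qed

lemma fin_facts:
  fixes P :: "nat \<Rightarrow> real"
  assumes P0: "\<And>x. P x \<ge> 0" and m: "m > 0" and fin: "(\<Sum>x. fisher_term P m x) \<noteq> \<top>"
  shows "\<And>x. P x = 0 \<Longrightarrow> dd P m x = 0"
    and "\<And>x. fr P m x * P x = (dd P m x)\<^sup>2"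
    and "\<And>x. fr P m x \<ge> 0"
    and "\<And>x. fisher_term P m x = ennreal (fr P m x)"
    and "summable (fr P m)"
    and "(\<Sum>x. fisher_term P m x) = ennreal (\<Sum>x. fr P m x)"
proof -
  have nt: "fisher_term P m x \<noteq> \<top>" for x
    using ennreal_term_le_suminf[of "fisher_term P m" x] fin by (auto simp: top_unique)
  show z: "dd P m x = 0" if "P x = 0" for x
    using nt[of x] that by (auto simp: fisher_term_def dd_def Let_def split: if_splits)
  show "fr P m x * P x = (dd P m x)\<^sup>2" for x
    using z[of x] by (auto simp: fr_def)
  show nn: "fr P m x \<ge> 0" for x
    using P0[of x] by (auto simp: fr_def)
  show e: "fisher_term P m x = ennreal (fr P m x)" for x
    using z[of x] by (auto simp: fisher_term_def fr_def dd_def Let_def)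
  have fin2: "(\<Sum>x. ennreal (fr P m x)) \<noteq> \<top>" using fin e by simp
  show sm: "summable (fr P m)" by (rule summable_suminf_not_top[OF nn fin2])
  show "(\<Sum>x. fisher_term P m x) = ennreal (\<Sum>x. fr P m x)"
    using e suminf_ennreal2[OF nn sm] by simp
qed

lemma abs_sub_le: "0 \<le> u \<Longrightarrow> 0 \<le> v \<Longrightarrow> \<bar>u - v\<bar> \<le> u + (v::real)"
  by (simp add: abs_if)

lemma dd_sums:
  fixes P :: "nat \<Rightarrow> real"
  assumes P0: "\<And>x. P x \<ge> 0" and a: "a > 0" and s1: "P sums 1" and sa: "(\<lambda>x. real x * P x) sums a"
  shows "dd P a sums 0" and "summable (\<lambda>x. norm (dd P a x))"
proof -
  have s2: "(\<lambda>x. real (Suc x) * P (Suc x)) sums a"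
    using sa by (subst sums_Suc_iff) simp
  have "(\<lambda>x. real (Suc x) * P (Suc x) / a - P x) sums (a / a - 1)"
    by (intro sums_diff sums_divide s2 s1)
  moreover have "dd P a = (\<lambda>x. real (Suc x) * P (Suc x) / a - P x)"
    by (simp add: dd_def fun_eq_iff)
  ultimately show "dd P a sums 0" using a by simp
  have "summable (\<lambda>x. real (Suc x) * P (Suc x) / a + P x)"
    by (intro summable_add summable_divide sums_summable[OF s2] sums_summable[OF s1])
  moreover have "norm (norm (dd P a x)) \<le> real (Suc x) * P (Suc x) / a + P x" for x
  proof -
    have u: "0 \<le> real (Suc x) * P (Suc x) / a" using P0[of "Suc x"] a by simp
    have "\<bar>real (Suc x) * P (Suc x) / a - P x\<bar> \<le> real (Suc x) * P (Suc x) / a + P x"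
      using u P0[of x] by (rule abs_sub_le)
    then show ?thesis by (simp add: dd_def)
  qed
  ultimately show "summable (\<lambda>x. norm (dd P a x))"
    by (rule summable_comparison_test'[where N=0])
qed

lemma conv_shift:
  fixes P Q :: "nat \<Rightarrow> real"
  shows "real (Suc s) * (\<Sum>x\<le>Suc s. P x * Q (Suc s - x)) =
    (\<Sum>x\<le>s. real (Suc x) * P (Suc x) * Q (s - x)) + (\<Sum>x\<le>s. P x * (real (Suc (s - x)) * Q (Suc (s - x))))"
proof -
  have "real (Suc s) * (\<Sum>x\<le>Suc s. P x * Q (Suc s - x)) =
     (\<Sum>x\<le>Suc s. real x * P x * Q (Suc s - x)) + (\<Sum>x\<le>Suc s. real (Suc s - x) * P x * Q (Suc s - x))"
  proof -
    have "real (Suc s) * (\<Sum>x\<le>Suc s. P x * Q (Suc s - x)) = (\<Sum>x\<le>Suc s. real (Suc s) * (P x * Q (Suc s - x)))"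
      by (rule sum_distrib_left)
    also have "\<dots> = (\<Sum>x\<le>Suc s. real x * P x * Q (Suc s - x) + real (Suc s - x) * P x * Q (Suc s - x))"
    proof (rule sum.cong[OF refl])
      fix x assume "x \<in> {..Suc s}"
      then have h: "real (Suc s) = real x + real (Suc s - x)" by (simp only: of_nat_add[symmetric]) simp
      show "real (Suc s) * (P x * Q (Suc s - x)) = real x * P x * Q (Suc s - x) + real (Suc s - x) * P x * Q (Suc s - x)"
        unfolding h by (simp only: distrib_right mult.assoc)
    qed
    also have "\<dots> = (\<Sum>x\<le>Suc s. real x * P x * Q (Suc s - x)) + (\<Sum>x\<le>Suc s. real (Suc s - x) * P x * Q (Suc s - x))"
      by (rule sum.distrib)
    finally show ?thesis .
  qed
  also have "(\<Sum>x\<le>Suc s. real x * P x * Q (Suc s - x)) = (\<Sum>x\<le>s. real (Suc x) * P (Suc x) * Q (s - x))"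
    by (subst sum.atMost_Suc_shift) simp
  also have "(\<Sum>x\<le>Suc s. real (Suc s - x) * P x * Q (Suc s - x)) = (\<Sum>x\<le>s. P x * (real (Suc (s - x)) * Q (Suc (s - x))))"
  proof -
    have "(\<Sum>x\<le>Suc s. real (Suc s - x) * P x * Q (Suc s - x)) = (\<Sum>x\<le>s. real (Suc s - x) * P x * Q (Suc s - x))"
      by (subst sum.atMost_Suc) simp
    also have "\<dots> = (\<Sum>x\<le>s. P x * (real (Suc (s - x)) * Q (Suc (s - x))))"
    proof (rule sum.cong[OF refl])
      fix x assume "x \<in> {..s}"
      then have h: "Suc s - x = Suc (s - x)" by (simp add: Suc_diff_le)
      show "real (Suc s - x) * P x * Q (Suc s - x) = P x * (real (Suc (s - x)) * Q (Suc (s - x)))"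
        unfolding h by (simp only: mult_ac)
    qed
    finally show ?thesis .
  qed
  finally show ?thesis .
qed

lemma alg_id:
  fixes fp p dp fq q dq al be :: real
  assumes "fp * p = dp\<^sup>2" "fq * q = dq\<^sup>2"
  shows "(al * dp * q + be * p * dq)\<^sup>2 = (p * q) * (al\<^sup>2 * fp * q + 2 * al * be * dp * dq + be\<^sup>2 * p * fq)"
proof -
  have "(p * q) * (al\<^sup>2 * fp * q + 2 * al * be * dp * dq + be\<^sup>2 * p * fq)
      = al\<^sup>2 * (fp * p) * q\<^sup>2 + 2 * al * be * p * q * dp * dq + be\<^sup>2 * p\<^sup>2 * (fq * q)"
    by (simp add: power2_eq_square algebra_simps)
  also have "\<dots> = (al * dp * q + be * p * dq)\<^sup>2"
    unfolding assms by (simp add: power2_eq_square algebra_simps)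
  finally show ?thesis by simp
qed

lemma pt_alg:
  fixes a b c u p q v :: real
  assumes a: "a > 0" and b: "b > 0" and c: "c = a + b"
  shows "(a / c) * (u / a - p) * q + (b / c) * p * (v / b - q) = u * q / c + p * v / c - p * q"
proof -
  have c0: "c > 0" using a b c by simp
  have e1: "(a / c) * (u / a - p) * q = (u * q - a * p * q) / c" using a c0 by (simp add: field_simps)
  have e2: "(b / c) * p * (v / b - q) = (p * v - b * p * q) / c" using b c0 by (simp add: field_simps)
  have "(a / c) * (u / a - p) * q + (b / c) * p * (v / b - q) = (u * q - a * p * q) / c + (p * v - b * p * q) / c"
    unfolding e1 e2 ..
  also have "\<dots> = u * q / c + p * v / c - (a + b) * p * q / c"
    by (simp add: diff_divide_distrib add_divide_distrib algebra_simps)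
  also have "(a + b) * p * q / c = p * q" using c c0 by simp
  finally show ?thesis .
qed

lemma core_fin:
  fixes P Q R :: "nat \<Rightarrow> real" and a b :: real
  assumes P0: "\<And>x. P x \<ge> 0" and Q0: "\<And>x. Q x \<ge> 0" and a: "a > 0" and b: "b > 0"
    and P1: "P sums 1" and Q1: "Q sums 1"
    and Pa: "(\<lambda>x. real x * P x) sums a" and Qb: "(\<lambda>x. real x * Q x) sums b"
    and finP: "(\<Sum>x. fisher_term P a x) \<noteq> \<top>" and finQ: "(\<Sum>x. fisher_term Q b x) \<noteq> \<top>"
    and R: "\<And>s. R s = (\<Sum>x\<le>s. P x * Q (s - x))"
  shows "scaled_fisher R (a + b) \<le> ennreal (a / (a + b)) * scaled_fisher P a + ennreal (b / (a + b)) * scaled_fisher Q b"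
proof -
  define al where "al = a / (a + b)"
  define be where "be = b / (a + b)"
  have al0: "al \<ge> 0" and be0: "be \<ge> 0" using a b by (auto simp: al_def be_def)
  note FP = fin_facts[OF P0 a finP]
  note FQ = fin_facts[OF Q0 b finQ]
  define g where "g s x = al * dd P a x * Q (s - x) + be * P x * dd Q b (s - x)" for s x
  define k where "k s x = al\<^sup>2 * fr P a x * Q (s - x) + 2 * al * be * dd P a x * dd Q b (s - x)
       + be\<^sup>2 * P x * fr Q b (s - x)" for s x
  define h where "h s = (\<Sum>x\<le>s. k s x)" for s
  have gk: "(g s x)\<^sup>2 = (P x * Q (s - x)) * k s x" for s x
    unfolding g_def k_def by (rule alg_id[OF FP(2) FQ(2)])
  have kpos: "k s x \<ge> 0" for s x
  proof (cases "P x = 0 \<or> Q (s - x) = 0")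
    case True
    then show ?thesis
    proof
      assume "P x = 0" then show ?thesis using FP(1)[of x] by (simp add: k_def fr_def)
    next
      assume "Q (s - x) = 0" then show ?thesis using FQ(1)[of "s - x"] by (simp add: k_def fr_def)
    qed
  next
    case False
    then have w: "P x * Q (s - x) > 0" using P0[of x] Q0[of "s - x"] by (simp add: less_le)
    have "0 \<le> (g s x)\<^sup>2" by simp
    then show ?thesis using w gk[of s x] by (simp add: zero_le_mult_iff)
  qed
  have key: "real (s + 1) * R (s + 1) / (a + b) - R s = (\<Sum>x\<le>s. g s x)" for s
  proof -
    have pt: "g s x = real (Suc x) * P (Suc x) * Q (s - x) / (a + b)
        + P x * (real (Suc (s - x)) * Q (Suc (s - x))) / (a + b) - P x * Q (s - x)" for x
      using pt_alg[OF a b refl, of "real (Suc x) * P (Suc x)" "P x" "Q (s - x)" "real (Suc (s - x)) * Q (Suc (s - x))"]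
      unfolding g_def dd_def al_def be_def by (simp add: mult.assoc)
    have "(\<Sum>x\<le>s. g s x) = (\<Sum>x\<le>s. real (Suc x) * P (Suc x) * Q (s - x)) / (a + b)
        + (\<Sum>x\<le>s. P x * (real (Suc (s - x)) * Q (Suc (s - x)))) / (a + b) - (\<Sum>x\<le>s. P x * Q (s - x))"
      unfolding pt by (simp add: sum.distrib sum_subtractf sum_divide_distrib)
    also have "\<dots> = real (Suc s) * R (Suc s) / (a + b) - R s"
      unfolding R conv_shift by (simp add: add_divide_distrib)
    finally show ?thesis by simp
  qed
  have ftle: "fisher_term R (a + b) s \<le> ennreal (h s)" for s
  proof (cases "R s = 0")
    case True
    have "\<forall>x\<in>{..s}. P x * Q (s - x) = 0"
      using True unfolding R by (subst sum_nonneg_eq_0_iff[symmetric]) (auto intro: mult_nonneg_nonneg P0 Q0)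
    then have "\<forall>x\<in>{..s}. g s x = 0"
    proof (intro ballI)
      fix x assume x: "x \<in> {..s}"
      have "(g s x)\<^sup>2 = 0" using gk[of s x] \<open>\<forall>x\<in>{..s}. P x * Q (s - x) = 0\<close> x by simp
      then show "g s x = 0" by simp
    qed
    then have "real (s + 1) * R (s + 1) / (a + b) - R s = 0" unfolding key by simp
    then show ?thesis using True by (simp add: fisher_term_def Let_def)
  next
    case False
    have Rpos: "R s > 0" using False unfolding R by (simp add: less_le sum_nonneg mult_nonneg_nonneg P0 Q0)
    have "(real (s + 1) * R (s + 1) / (a + b) - R s)\<^sup>2 \<le> R s * h s"
      unfolding key unfolding R h_def
      by (rule wcs) (auto intro: mult_nonneg_nonneg P0 Q0 kpos gk)
    then have "(real (s + 1) * R (s + 1) / (a + b) - R s)\<^sup>2 / R s \<le> h s"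
      using Rpos by (simp add: divide_le_eq mult.commute)
    then show ?thesis using False by (simp add: fisher_term_def Let_def ennreal_leI)
  qed
  define FPs where "FPs = (\<Sum>x. fr P a x)"
  define FQs where "FQs = (\<Sum>x. fr Q b x)"
  have c1: "(\<lambda>s. \<Sum>x\<le>s. fr P a x * Q (s - x)) sums (FPs * 1)"
  proof -
    have "(\<lambda>s. \<Sum>x\<le>s. fr P a x * Q (s - x)) sums (FPs * (\<Sum>x. Q x))"
      unfolding FPs_def
      by (rule Cauchy_product_sums) (use FP(3,5) Q0 sums_summable[OF Q1] in auto)
    then show ?thesis using sums_unique[OF Q1] by simp
  qed
  have c2: "(\<lambda>s. \<Sum>x\<le>s. dd P a x * dd Q b (s - x)) sums (0 * 0)"
  proof -
    have "(\<lambda>s. \<Sum>x\<le>s. dd P a x * dd Q b (s - x)) sums ((\<Sum>x. dd P a x) * (\<Sum>x. dd Q b x))"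
      by (rule Cauchy_product_sums) (use dd_sums[OF P0 a P1 Pa] dd_sums[OF Q0 b Q1 Qb] in auto)
    then show ?thesis using sums_unique[OF dd_sums(1)[OF P0 a P1 Pa]] sums_unique[OF dd_sums(1)[OF Q0 b Q1 Qb]] by simp
  qed
  have c3: "(\<lambda>s. \<Sum>x\<le>s. P x * fr Q b (s - x)) sums (1 * FQs)"
  proof -
    have "(\<lambda>s. \<Sum>x\<le>s. P x * fr Q b (s - x)) sums ((\<Sum>x. P x) * FQs)"
      unfolding FQs_def
      by (rule Cauchy_product_sums) (use FQ(3,5) P0 sums_summable[OF P1] in auto)
    then show ?thesis using sums_unique[OF P1] by simp
  qed
  have hs: "h sums (al\<^sup>2 * (FPs * 1) + 2 * al * be * (0 * 0) + be\<^sup>2 * (1 * FQs))"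
  proof -
    have "(\<lambda>s. al\<^sup>2 * (\<Sum>x\<le>s. fr P a x * Q (s - x)) + 2 * al * be * (\<Sum>x\<le>s. dd P a x * dd Q b (s - x))
         + be\<^sup>2 * (\<Sum>x\<le>s. P x * fr Q b (s - x))) sums (al\<^sup>2 * (FPs * 1) + 2 * al * be * (0 * 0) + be\<^sup>2 * (1 * FQs))"
      by (intro sums_add sums_mult c1 c2 c3)
    moreover have "h = (\<lambda>s. al\<^sup>2 * (\<Sum>x\<le>s. fr P a x * Q (s - x)) + 2 * al * be * (\<Sum>x\<le>s. dd P a x * dd Q b (s - x))
         + be\<^sup>2 * (\<Sum>x\<le>s. P x * fr Q b (s - x)))"
      by (simp add: fun_eq_iff h_def k_def sum.distrib sum_distrib_left mult.assoc)
    ultimately show ?thesis by simp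
  qed
  define H where "H = al\<^sup>2 * FPs + be\<^sup>2 * FQs"
  have hs': "h sums H" using hs by (simp add: H_def)
  have h0: "h s \<ge> 0" for s unfolding h_def by (simp add: sum_nonneg kpos)
  have FPs0: "FPs \<ge> 0" unfolding FPs_def by (rule suminf_nonneg[OF FP(5) FP(3)])
  have FQs0: "FQs \<ge> 0" unfolding FQs_def by (rule suminf_nonneg[OF FQ(5) FQ(3)])
  have "(\<Sum>s. fisher_term R (a + b) s) \<le> (\<Sum>s. ennreal (h s))"
    by (rule suminf_le[OF ftle summableI summableI])
  also have "\<dots> = ennreal H"
    using suminf_ennreal2[OF h0 sums_summable[OF hs']] sums_unique[OF hs'] by simp
  finally have le1: "(\<Sum>s. fisher_term R (a + b) s) \<le> ennreal H" .
  have "scaled_fisher R (a + b) \<le> ennreal (a + b) * ennreal H"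
    unfolding scaled_fisher_def by (rule mult_left_mono[OF le1]) simp
  also have "\<dots> = ennreal ((a + b) * H)"
  proof -
    have "H \<ge> 0" unfolding H_def using FPs0 FQs0 by simp
    then show ?thesis by (intro ennreal_mult[symmetric]) (use a b in auto)
  qed
  also have "(a + b) * H = al * (a * FPs) + be * (b * FQs)"
  proof -
    have x1: "al * (a + b) = a" "be * (a + b) = b" using a b by (simp_all add: al_def be_def)
    have "(a + b) * H = (al * (a + b)) * al * FPs + (be * (a + b)) * be * FQs"
      unfolding H_def by (simp add: power2_eq_square algebra_simps)
    then show ?thesis unfolding x1 by (simp add: algebra_simps)
  qed
  also have "ennreal (al * (a * FPs) + be * (b * FQs)) = ennreal al * (ennreal a * ennreal FPs) + ennreal be * (ennreal b * ennreal FQs)"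
    using a b al0 be0 FPs0 FQs0 by (simp add: ennreal_plus ennreal_mult)
  also have "\<dots> = ennreal (a / (a + b)) * scaled_fisher P a + ennreal (b / (a + b)) * scaled_fisher Q b"
    unfolding scaled_fisher_def FP(6) FQ(6) FPs_def FQs_def al_def be_def by simp
  finally show ?thesis .
qed



lemma pmf_sums1:
  assumes M: "prob_space M" and Y: "Y \<in> measurable M (count_space UNIV)"
  shows "(\<lambda>x::nat. measure M {\<omega>\<in>space M. Y \<omega> = x}) sums 1"
proof -
  interpret prob_space M by (rule M)
  have "(\<lambda>x. measure M {\<omega>\<in>space M. Y \<omega> = x}) sums measure M (\<Union>x. {\<omega>\<in>space M. Y \<omega> = x})"
    by (rule finite_measure_UNION) (use Y in \<open>auto simp: disjoint_family_on_def\<close>)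
  moreover have "(\<Union>x. {\<omega>\<in>space M. Y \<omega> = x}) = space M" by auto
  ultimately show ?thesis by (simp add: prob_space)
qed

lemma pmf_mean:
  assumes M: "prob_space M" and Y: "Y \<in> measurable M (count_space UNIV)"
    and I: "integrable M (\<lambda>\<omega>. real (Y \<omega>))"
  shows "(\<lambda>x::nat. real x * measure M {\<omega>\<in>space M. Y \<omega> = x}) sums integral\<^sup>L M (\<lambda>\<omega>. real (Y \<omega>))"
proof -
  interpret prob_space M by (rule M)
  define A where "A x = {\<omega>\<in>space M. Y \<omega> = x}" for x
  have As: "A x \<in> sets M" for x unfolding A_def using Y by measurable
  have dj: "disjoint_family A" by (auto simp: disjoint_family_on_def A_def)
  have "(\<integral>\<^sup>+\<omega>. ennreal (real (Y \<omega>)) \<partial>M) = (\<integral>\<^sup>+\<omega>. (\<Sum>x. ennreal (real x) * indicator (A x) \<omega>) \<partial>M)"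
  proof (rule nn_integral_cong)
    fix \<omega> assume "\<omega> \<in> space M"
    then have "\<omega> \<in> A (Y \<omega>)" by (simp add: A_def)
    then show "ennreal (real (Y \<omega>)) = (\<Sum>x. ennreal (real x) * indicator (A x) \<omega>)"
      using suminf_cmult_indicator[OF dj, of \<omega> "Y \<omega>" "\<lambda>x. ennreal (real x)"] by simp
  qed
  also have "\<dots> = (\<Sum>x. \<integral>\<^sup>+\<omega>. ennreal (real x) * indicator (A x) \<omega> \<partial>M)"
    by (rule nn_integral_suminf) (use As in auto)
  also have "\<dots> = (\<Sum>x. ennreal (real x * measure M (A x)))"
    using As by (simp add: nn_integral_cmult_indicator emeasure_eq_measure ennreal_mult)
  finally have e1: "(\<integral>\<^sup>+\<omega>. ennreal (real (Y \<omega>)) \<partial>M) = (\<Sum>x. ennreal (real x * measure M (A x)))" .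
  have e2: "(\<integral>\<^sup>+\<omega>. ennreal (real (Y \<omega>)) \<partial>M) = ennreal (integral\<^sup>L M (\<lambda>\<omega>. real (Y \<omega>)))"
    by (rule nn_integral_eq_integral[OF I]) auto
  have nn: "\<And>x. 0 \<le> real x * measure M (A x)" by simp
  have sm: "summable (\<lambda>x. real x * measure M (A x))"
    by (rule summable_suminf_not_top[OF nn]) (metis e1 e2 ennreal_neq_top)
  have "ennreal (\<Sum>x. real x * measure M (A x)) = ennreal (integral\<^sup>L M (\<lambda>\<omega>. real (Y \<omega>)))"
    using suminf_ennreal2[OF nn sm] e1 e2 by simp
  then have "(\<Sum>x. real x * measure M (A x)) = integral\<^sup>L M (\<lambda>\<omega>. real (Y \<omega>))"
    by (subst (asm) ennreal_inj) (auto intro: suminf_nonneg[OF sm nn] integral_nonneg_AE)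
  then show ?thesis using summable_sums[OF sm] by (simp add: A_def)
qed

lemma core:
  fixes P Q R :: "nat \<Rightarrow> real" and a b :: real
  assumes P0: "\<And>x. P x \<ge> 0" and Q0: "\<And>x. Q x \<ge> 0" and a: "a > 0" and b: "b > 0"
    and P1: "P sums 1" and Q1: "Q sums 1"
    and Pa: "(\<lambda>x. real x * P x) sums a" and Qb: "(\<lambda>x. real x * Q x) sums b"
    and R: "\<And>s. R s = (\<Sum>x\<le>s. P x * Q (s - x))"
  shows "scaled_fisher R (a + b) \<le> ennreal (a / (a + b)) * scaled_fisher P a + ennreal (b / (a + b)) * scaled_fisher Q b"
proof (cases "(\<Sum>x. fisher_term P a x) = \<top> \<or> (\<Sum>x. fisher_term Q b x) = \<top>")
  case True
  have "ennreal (a / (a + b)) * scaled_fisher P a + ennreal (b / (a + b)) * scaled_fisher Q b = \<top>"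
    using True a b by (auto simp: scaled_fisher_def ennreal_mult_eq_top_iff)
  then show ?thesis by (metis top_greatest)
next
  case False
  then show ?thesis using core_fin[OF assms(1-8) _ _ R] by blast
qed

lemma meas_plus_nat:
  assumes "f \<in> measurable N (count_space UNIV)" "g \<in> measurable N (count_space UNIV)"
  shows "(\<lambda>x. f x + g x :: nat) \<in> measurable N (count_space UNIV)"
  using assms by measurable

lemma meas_sum_nat:
  assumes "finite I"
  shows "(\<lambda>f. \<Sum>i\<in>I. f i :: nat) \<in> measurable (PiM I (\<lambda>_. count_space UNIV)) (count_space UNIV)"
proof -
  have "(\<lambda>f. \<Sum>i\<in>J. f i :: nat) \<in> measurable (PiM I (\<lambda>_. count_space UNIV)) (count_space UNIV)" if "J \<subseteq> I" for J
    using finite_subset[OF that assms] that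
  proof (induction J rule: finite_induct)
    case empty
    then show ?case by simp
  next
    case (insert i J)
    have "(\<lambda>f. f i :: nat) \<in> measurable (PiM I (\<lambda>_. count_space UNIV)) (count_space UNIV)"
      using insert by (intro measurable_component_singleton) auto
    then show ?case using insert by (simp add: meas_plus_nat)
  qed
  then show ?thesis by simp
qed

lemma pmf_add:
  fixes U V :: "'a \<Rightarrow> nat"
  assumes M: "prob_space M" and ind: "prob_space.indep_var M (count_space UNIV) U (count_space UNIV) V"
  shows "measure M {\<omega>\<in>space M. U \<omega> + V \<omega> = s} =
    (\<Sum>x\<le>s. measure M {\<omega>\<in>space M. U \<omega> = x} * measure M {\<omega>\<in>space M. V \<omega> = s - x})"
proof -
  interpret prob_space M by (rule M)
  have U: "U \<in> measurable M (count_space UNIV)" using indep_var_rv1[OF ind] .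
  have V: "V \<in> measurable M (count_space UNIV)" using indep_var_rv2[OF ind] .
  define B where "B x = (\<lambda>\<omega>. (U \<omega>, V \<omega>)) -` ({x} \<times> {s - x}) \<inter> space M" for x
  have "{\<omega>\<in>space M. U \<omega> + V \<omega> = s} = (\<Union>x\<in>{..s}. B x)"
    by (auto simp: B_def)
  then have "measure M {\<omega>\<in>space M. U \<omega> + V \<omega> = s} = (\<Sum>x\<le>s. measure M (B x))"
  proof (simp only:, intro finite_measure_finite_Union)
    have "B x = {\<omega>\<in>space M. U \<omega> = x \<and> V \<omega> = s - x}" for x by (auto simp: B_def)
    moreover have "{\<omega>\<in>space M. U \<omega> = x \<and> V \<omega> = s - x} \<in> sets M" for x using U V by measurable
    ultimately show "B ` {..s} \<subseteq> sets M" by auto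
    show "disjoint_family_on B {..s}" by (auto simp: disjoint_family_on_def B_def)
  qed simp
  also have "\<dots> = (\<Sum>x\<le>s. measure M {\<omega>\<in>space M. U \<omega> = x} * measure M {\<omega>\<in>space M. V \<omega> = s - x})"
  proof (rule sum.cong[OF refl])
    fix x
    have "measure M (B x) = measure M (U -` {x} \<inter> space M) * measure M (V -` {s - x} \<inter> space M)"
      unfolding B_def by (rule indep_varD[OF ind]) auto
    moreover have "U -` {x} \<inter> space M = {\<omega>\<in>space M. U \<omega> = x}" "V -` {s - x} \<inter> space M = {\<omega>\<in>space M. V \<omega> = s - x}"
      by auto
    ultimately show "measure M (B x) = measure M {\<omega>\<in>space M. U \<omega> = x} * measure M {\<omega>\<in>space M. V \<omega> = s - x}"
      by simp
  qed
  finally show ?thesis .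
qed



theorem proposition3:
  fixes M :: "'a measure" and X :: "nat \<Rightarrow> 'a \<Rightarrow> nat" and n :: nat
  assumes "prob_space M"
    and "n \<ge> 1"
    and "prob_space.indep_vars M (\<lambda>_. count_space UNIV) X {1..n}"
    and "\<forall>i\<in>{1..n}. integrable M (\<lambda>\<omega>. real (X i \<omega>))"
    and "\<forall>i\<in>{1..n}. integral\<^sup>L M (\<lambda>\<omega>. real (X i \<omega>)) > 0"
  shows "K_rv M (\<lambda>\<omega>. \<Sum>i=1..n. X i \<omega>)
           \<le> (\<Sum>i=1..n. ennreal (integral\<^sup>L M (\<lambda>\<omega>. real (X i \<omega>))
                                 / (\<Sum>j=1..n. integral\<^sup>L M (\<lambda>\<omega>. real (X j \<omega>))))
                       * K_rv M (X i))"
proof -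
  interpret prob_space M by (rule assms(1))
  note ind = assms(3)
  define p where "p i = integral\<^sup>L M (\<lambda>\<omega>. real (X i \<omega>))" for i
  define S where "S k \<omega> = (\<Sum>i=1..k. X i \<omega>)" for k \<omega>
  define lam where "lam k = (\<Sum>j=1..k. p j)" for k
  define pm where "pm Y x = measure M {\<omega>\<in>space M. Y \<omega> = x}" for Y and x :: nat
  have rv: "X i \<in> measurable M (count_space UNIV)" if "i \<in> {1..n}" for i
    using ind that unfolding indep_vars_def by auto
  have pp: "p i > 0" if "i \<in> {1..n}" for i using assms(5) that by (simp add: p_def)
  have Xint: "integrable M (\<lambda>\<omega>. real (X i \<omega>))" if "i \<in> {1..n}" for i using assms(4) that by simp
  have lampos: "lam k > 0" if "1 \<le> k" "k \<le> n" for k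
    unfolding lam_def using that pp by (intro sum_pos) auto
  have main: "S k \<in> measurable M (count_space UNIV) \<and> integrable M (\<lambda>\<omega>. real (S k \<omega>))
      \<and> integral\<^sup>L M (\<lambda>\<omega>. real (S k \<omega>)) = lam k
      \<and> K_rv M (S k) \<le> (\<Sum>i=1..k. ennreal (p i / lam k) * K_rv M (X i))"
    if "1 \<le> k" "k \<le> n" for k
    using that
  proof (induction k)
    case 0
    then show ?case by simp
  next
    case (Suc k)
    show ?case
    proof (cases "k = 0")
      case True
      have S1: "S (Suc k) = X 1" using True by (simp add: S_def fun_eq_iff)
      have l1: "lam (Suc k) = p 1" using True by (simp add: lam_def)
      have "1 \<in> {1..n}" using Suc by simp
      then show ?thesis using S1 l1 rv Xint pp[of 1] True by (simp add: p_def)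
    next
      case False
      then have k1: "1 \<le> k" "k \<le> n" "Suc k \<le> n" using Suc by auto
      note IH = Suc.IH[OF k1(1,2)]
      have kn: "Suc k \<in> {1..n}" using k1 by simp
      have SS: "S (Suc k) \<omega> = S k \<omega> + X (Suc k) \<omega>" for \<omega> by (simp add: S_def)
      have lS: "lam (Suc k) = lam k + p (Suc k)" by (simp add: lam_def)
      have indep: "indep_var (count_space UNIV) (S k) (count_space UNIV) (X (Suc k))"
      proof -
        have "indep_var (count_space UNIV) ((\<lambda>f. \<Sum>i\<in>{1..k}. f i) \<circ> (\<lambda>\<omega>. restrict (\<lambda>i. X i \<omega>) {1..k}))
             (count_space UNIV) ((\<lambda>f. f (Suc k)) \<circ> (\<lambda>\<omega>. restrict (\<lambda>i. X i \<omega>) {Suc k}))"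
          using k1 by (intro indep_var_compose[OF indep_var_restrict[OF ind]] meas_sum_nat measurable_component_singleton) auto
        moreover have "((\<lambda>f. \<Sum>i\<in>{1..k}. f i) \<circ> (\<lambda>\<omega>. restrict (\<lambda>i. X i \<omega>) {1..k})) = S k"
          by (auto simp: fun_eq_iff S_def)
        moreover have "((\<lambda>f. f (Suc k)) \<circ> (\<lambda>\<omega>. restrict (\<lambda>i. X i \<omega>) {Suc k})) = X (Suc k)"
          by (auto simp: fun_eq_iff)
        ultimately show ?thesis by simp
      qed
      have Sm: "S (Suc k) \<in> measurable M (count_space UNIV)"
        unfolding SS[abs_def] using IH rv[OF kn] by (simp add: meas_plus_nat)
      have Si: "integrable M (\<lambda>\<omega>. real (S (Suc k) \<omega>))"
        unfolding SS using IH Xint[OF kn] by simp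
      have Se: "integral\<^sup>L M (\<lambda>\<omega>. real (S (Suc k) \<omega>)) = lam (Suc k)"
        unfolding SS lS using IH Xint[OF kn] by (simp add: p_def)
      have conv: "pm (S (Suc k)) s = (\<Sum>x\<le>s. pm (S k) x * pm (X (Suc k)) (s - x))" for s
        unfolding pm_def SS by (rule pmf_add[OF assms(1) indep])
      have step: "K_rv M (S (Suc k)) \<le> ennreal (lam k / lam (Suc k)) * K_rv M (S k)
          + ennreal (p (Suc k) / lam (Suc k)) * K_rv M (X (Suc k))"
      proof -
        have "scaled_fisher (pm (S (Suc k))) (lam k + p (Suc k))
          \<le> ennreal (lam k / (lam k + p (Suc k))) * scaled_fisher (pm (S k)) (lam k)
           + ennreal (p (Suc k) / (lam k + p (Suc k))) * scaled_fisher (pm (X (Suc k))) (p (Suc k))"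
        proof (rule core)
          show "\<And>x. 0 \<le> pm (S k) x" "\<And>x. 0 \<le> pm (X (Suc k)) x" by (simp_all add: pm_def)
          show "0 < lam k" using lampos k1 by simp
          show "0 < p (Suc k)" using pp kn by simp
          show "pm (S k) sums 1" unfolding pm_def using pmf_sums1[OF assms(1)] IH by simp
          show "pm (X (Suc k)) sums 1" unfolding pm_def using pmf_sums1[OF assms(1) rv[OF kn]] by simp
          show "(\<lambda>x. real x * pm (S k) x) sums lam k"
          proof -
            have "S k \<in> measurable M (count_space UNIV)" "integrable M (\<lambda>\<omega>. real (S k \<omega>))"
              "integral\<^sup>L M (\<lambda>\<omega>. real (S k \<omega>)) = lam k" using IH by auto
            from pmf_mean[OF assms(1) this(1,2)] this(3) show ?thesis unfolding pm_def by simp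
          qed
          show "(\<lambda>x. real x * pm (X (Suc k)) x) sums p (Suc k)"
            unfolding pm_def p_def using pmf_mean[OF assms(1) rv[OF kn] Xint[OF kn]] by simp
        qed (rule conv)
        then show ?thesis unfolding K_rv_def pm_def[symmetric] Se using IH lS by (simp add: p_def)
      qed
      have "ennreal (lam k / lam (Suc k)) * K_rv M (S k)
         \<le> ennreal (lam k / lam (Suc k)) * (\<Sum>i=1..k. ennreal (p i / lam k) * K_rv M (X i))"
        using IH by (intro mult_left_mono) auto
      also have "\<dots> = (\<Sum>i=1..k. ennreal (p i / lam (Suc k)) * K_rv M (X i))"
        unfolding sum_distrib_left
      proof (rule sum.cong[OF refl])
        fix i assume i: "i \<in> {1..k}"
        then have "p i > 0" using pp k1 by auto
        moreover have "lam k > 0" "lam (Suc k) > 0" using lampos k1 by auto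
        ultimately have "ennreal (lam k / lam (Suc k)) * ennreal (p i / lam k) = ennreal (p i / lam (Suc k))"
        proof -
          assume h: "p i > 0" "lam k > 0" "lam (Suc k) > 0"
          have "ennreal (lam k / lam (Suc k)) * ennreal (p i / lam k) = ennreal (lam k / lam (Suc k) * (p i / lam k))"
            using h by (intro ennreal_mult[symmetric]) simp_all
          also have "lam k / lam (Suc k) * (p i / lam k) = p i / lam (Suc k)" using h by simp
          finally show ?thesis .
        qed
        then show "ennreal (lam k / lam (Suc k)) * (ennreal (p i / lam k) * K_rv M (X i)) =
            ennreal (p i / lam (Suc k)) * K_rv M (X i)" by (simp add: mult.assoc[symmetric])
      qed
      finally have "K_rv M (S (Suc k)) \<le> (\<Sum>i=1..k. ennreal (p i / lam (Suc k)) * K_rv M (X i))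
          + ennreal (p (Suc k) / lam (Suc k)) * K_rv M (X (Suc k))"
        using step by (meson add_right_mono order_trans)
      also have "\<dots> = (\<Sum>i=1..Suc k. ennreal (p i / lam (Suc k)) * K_rv M (X i))"
        by simp
      finally show ?thesis using Sm Si Se by simp
    qed
  qed
  have "K_rv M (S n) \<le> (\<Sum>i=1..n. ennreal (p i / lam n) * K_rv M (X i))"
    using main[of n] assms(2) by simp
  then show ?thesis unfolding S_def[abs_def] p_def lam_def .
qed

end
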